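(* Let $1\le k\le n+1$ and $\underline d=(d_1,\dots,d_k)$ with $2\le d_1\le\dots\le d_k$. Then $N(\underline d,n)>1$ unless $\underline d=(2)$.
   Context: For a homogeneous complex polynomial $f$ in $x_0,\dots,x_n$ and $x\in\mathbb C^{n+1}$ write $df|_x=(\partial f/\partial x_0(x),\dots,\partial f/\partial x_n(x))^T$. Let $\Pi_{\underline d,n}$ be the space of $k$-tuples of homogeneous complex polynomials in $x_0,\dots,x_n$ of degrees $d_1,\dots,d_k$, and $\Sigma_{\underline d,n}$ the set of tuples for which there is $x\in\mathbb C^{n+1}\setminus\{0\}$ with all $f_i(x)=0$ and the gradients $df_i|_x$ linearly dependent. Let $\mathbf W_{k,n}=\{(A,x)\in\mathrm{Mat}_{n+1,k}(\mathbb C)\times\mathbb C^{n+1}:\operatorname{rk}A<k,\ x^TA=0\}$. For $(f^0_1,\dots,f^0_k)\in\Pi_{\underline d,n}\setminus\Sigma_{\underline d,n}$ let $F(x)=(df^0_1|_x,\dots,df^0_k|_x,x)$; then $F^{-1}(\mathbf W_{k,n})=\{0\}$ and $N(\underline d,n)$ is the intersection multiplicity of $F(\mathbb C^{n+1})$ and $\mathbf W_{k,n}$ at $0$, equivalently $\dim_{\mathbb C}\mathbb C[x_0,\dots,x_n]/F^*(I(\mathbf W_{k,n}))$; it is independent of the choice of $(f^0_i)$. *)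

theory Defs
  imports Complex_Main "HOL-Library.Poly_Mapping" "HOL-Library.Extended_Nat"
begin

text \<open>Multivariate complex polynomials in variables indexed by type 'v:
  finitely supported maps from monomials (exponent vectors 'v =>0 nat) to coefficients.\<close>

type_synonym 'v mpoly = "('v \<Rightarrow>\<^sub>0 nat) \<Rightarrow>\<^sub>0 complex"

definition mconst :: "complex \<Rightarrow> 'v mpoly" where
  "mconst c = Poly_Mapping.single 0 c"

definition mvar :: "'v \<Rightarrow> 'v mpoly" where
  "mvar i = Poly_Mapping.single (Poly_Mapping.single i 1) 1"

definition mvars :: "'v mpoly \<Rightarrow> 'v set" where
  "mvars p = (\<Union>m\<in>Poly_Mapping.keys p. Poly_Mapping.keys (m :: 'v \<Rightarrow>\<^sub>0 nat))"

definition mon_deg :: "('v \<Rightarrow>\<^sub>0 nat) \<Rightarrow> nat" where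
  "mon_deg m = (\<Sum>i\<in>Poly_Mapping.keys m. Poly_Mapping.lookup m i)"

definition homogeneous :: "nat \<Rightarrow> 'v mpoly \<Rightarrow> bool" where
  "homogeneous d p \<longleftrightarrow> (\<forall>m\<in>Poly_Mapping.keys p. mon_deg m = d)"

definition meval :: "('v \<Rightarrow> complex) \<Rightarrow> 'v mpoly \<Rightarrow> complex" where
  "meval a p = (\<Sum>m\<in>Poly_Mapping.keys p. Poly_Mapping.lookup p m * (\<Prod>i\<in>Poly_Mapping.keys m. a i ^ Poly_Mapping.lookup m i))"

definition msubst :: "('v \<Rightarrow> 'w mpoly) \<Rightarrow> 'v mpoly \<Rightarrow> 'w mpoly" where
  "msubst \<sigma> p = (\<Sum>m\<in>Poly_Mapping.keys p. mconst (Poly_Mapping.lookup p m) * (\<Prod>i\<in>Poly_Mapping.keys m. \<sigma> i ^ Poly_Mapping.lookup m i))"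

definition mpderiv :: "'v \<Rightarrow> 'v mpoly \<Rightarrow> 'v mpoly" where
  "mpderiv i p = (\<Sum>m\<in>Poly_Mapping.keys p.
     Poly_Mapping.single (m - Poly_Mapping.single i 1) (of_nat (Poly_Mapping.lookup m i) * Poly_Mapping.lookup p m))"

definition polyring :: "'v set \<Rightarrow> 'v mpoly set" where
  "polyring V = {p. mvars p \<subseteq> V}"

definition gen_ideal :: "'v set \<Rightarrow> 'v mpoly set \<Rightarrow> 'v mpoly set" where
  "gen_ideal V G = {q. \<exists>S c. finite S \<and> S \<subseteq> G \<and> (\<forall>g\<in>S. c g \<in> polyring V)
                          \<and> q = (\<Sum>g\<in>S. c g * g)}"

text \<open>Dimension over C of the quotient C[x_v | v in V] / J: the least size of a finite
  subset B of the ring whose C-span together with J is the whole ring (infinity if none).\<close>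
definition spans_mod :: "'v set \<Rightarrow> 'v mpoly set \<Rightarrow> 'v mpoly set \<Rightarrow> bool" where
  "spans_mod V J B \<longleftrightarrow> (\<forall>p\<in>polyring V. \<exists>c. p - (\<Sum>b\<in>B. mconst (c b) * b) \<in> J)"

definition quot_dim :: "'v set \<Rightarrow> 'v mpoly set \<Rightarrow> enat" where
  "quot_dim V J =
     (if \<exists>B. finite B \<and> B \<subseteq> polyring V \<and> spans_mod V J B
      then enat (LEAST n. \<exists>B. finite B \<and> B \<subseteq> polyring V \<and> spans_mod V J B \<and> card B = n)
      else \<infinity>)"

text \<open>Coordinates on Mat_{n+1,k}(C) x C^{n+1}: Inl (i,j) is the matrix entry A_{ij}
  (0 <= i <= n, 0 <= j < k), Inr i is the coordinate x_i (0 <= i <= n).\<close>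
definition W_vars :: "nat \<Rightarrow> nat \<Rightarrow> ((nat \<times> nat) + nat) set" where
  "W_vars k n = Inl ` ({..n} \<times> {..<k}) \<union> Inr ` {..n}"

text \<open>The variety W_{k,n} = {(A,x) : rk A < k, x^T A = 0}; rk A < k means that the k
  columns of A are linearly dependent.\<close>
definition in_W :: "nat \<Rightarrow> nat \<Rightarrow> ((nat \<times> nat) + nat \<Rightarrow> complex) \<Rightarrow> bool" where
  "in_W k n a \<longleftrightarrow>
     (\<exists>c :: nat \<Rightarrow> complex. (\<exists>j<k. c j \<noteq> 0) \<and>
        (\<forall>i\<le>n. (\<Sum>j<k. a (Inl (i, j)) * c j) = 0)) \<and>
     (\<forall>j<k. (\<Sum>i\<le>n. a (Inr i) * a (Inl (i, j))) = 0)"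

definition I_W :: "nat \<Rightarrow> nat \<Rightarrow> ((nat \<times> nat) + nat) mpoly set" where
  "I_W k n = {p \<in> polyring (W_vars k n). \<forall>a. in_W k n a \<longrightarrow> meval a p = 0}"

text \<open>The map F(x) = (df_1|_x, ..., df_k|_x, x) as a polynomial map: column j of the
  matrix is the gradient of f_j.\<close>
definition F_map :: "(nat \<Rightarrow> nat mpoly) \<Rightarrow> (nat \<times> nat) + nat \<Rightarrow> nat mpoly" where
  "F_map f v = (case v of Inl (i, j) \<Rightarrow> mpderiv i (f j) | Inr i \<Rightarrow> mvar i)"

definition in_Pi :: "nat \<Rightarrow> (nat \<Rightarrow> nat) \<Rightarrow> nat \<Rightarrow> (nat \<Rightarrow> nat mpoly) \<Rightarrow> bool" where
  "in_Pi k d n f \<longleftrightarrow> (\<forall>j<k. f j \<in> polyring {..n} \<and> homogeneous (d j) (f j))"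

definition in_Sigma :: "nat \<Rightarrow> nat \<Rightarrow> (nat \<Rightarrow> nat mpoly) \<Rightarrow> bool" where
  "in_Sigma k n f \<longleftrightarrow>
     (\<exists>x :: nat \<Rightarrow> complex. (\<exists>i\<le>n. x i \<noteq> 0) \<and> (\<forall>j<k. meval x (f j) = 0) \<and>
        (\<exists>c :: nat \<Rightarrow> complex. (\<exists>j<k. c j \<noteq> 0) \<and>
           (\<forall>i\<le>n. (\<Sum>j<k. c j * meval x (mpderiv i (f j))) = 0)))"

definition mult_N :: "nat \<Rightarrow> nat \<Rightarrow> (nat \<Rightarrow> nat mpoly) \<Rightarrow> enat" where
  "mult_N k n f = quot_dim {..n} (gen_ideal {..n} (msubst (F_map f) ` I_W k n))"

end

theory Submission
  imports Defs "HOL-Computational_Algebra.Polynomial"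
begin

lemma lookup_mconst_mult: "Poly_Mapping.lookup (mconst c * b) k = c * Poly_Mapping.lookup b k"
  unfolding mconst_def
  by (simp add: mult_map_scale_conv_mult[symmetric] map.rep_eq when_def)

lemma lookup_mconst: "Poly_Mapping.lookup (mconst c) m = (if m = 0 then c else 0)"
  by (simp add: mconst_def lookup_single when_def)

lemma single01_ne0 [simp]: "Poly_Mapping.single (0::nat) (1::nat) \<noteq> 0"
proof
  assume "Poly_Mapping.single (0::nat) (1::nat) = 0"
  then have "Poly_Mapping.lookup (Poly_Mapping.single (0::nat) (1::nat)) 0 = Poly_Mapping.lookup 0 0" by simp
  then show False by simp
qed

lemma single01_ne0' [simp]: "Poly_Mapping.single (0::nat) (Suc 0) \<noteq> 0"
  using single01_ne0 by simp

definition ordge :: "nat \<Rightarrow> 'v mpoly \<Rightarrow> bool" where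
  "ordge e q \<longleftrightarrow> (\<forall>m\<in>Poly_Mapping.keys q. e \<le> mon_deg m)"

lemma mon_deg_superset:
  assumes "finite S" "Poly_Mapping.keys m \<subseteq> S"
  shows "mon_deg m = (\<Sum>i\<in>S. Poly_Mapping.lookup m i)"
  unfolding mon_deg_def
  by (rule sum.mono_neutral_left) (use assms in \<open>auto simp: in_keys_iff\<close>)

lemma mon_deg_add: "mon_deg (a + b) = mon_deg a + mon_deg b"
proof -
  let ?S = "Poly_Mapping.keys a \<union> Poly_Mapping.keys b"
  have "mon_deg (a+b) = (\<Sum>i\<in>?S. Poly_Mapping.lookup (a+b) i)"
    by (rule mon_deg_superset) (use keys_add[of a b] in auto)
  also have "\<dots> = (\<Sum>i\<in>?S. Poly_Mapping.lookup a i) + (\<Sum>i\<in>?S. Poly_Mapping.lookup b i)"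
    by (simp add: lookup_add sum.distrib)
  also have "\<dots> = mon_deg a + mon_deg b"
    by (simp add: mon_deg_superset[symmetric])
  finally show ?thesis .
qed

lemma mon_deg_zero [simp]: "mon_deg 0 = 0"
  by (simp add: mon_deg_def)

lemma mon_deg_single [simp]: "mon_deg (Poly_Mapping.single w e) = e"
  by (subst mon_deg_superset[of "{w}"]) auto

lemma keys_sub_single:
  assumes "Poly_Mapping.keys m \<subseteq> {w}"
  shows "m = Poly_Mapping.single w (mon_deg m)"
proof -
  have "mon_deg m = Poly_Mapping.lookup m w"
    using mon_deg_superset[of "{w}" m] assms by simp
  then show ?thesis
    using assms by (intro poly_mapping_eqI) (auto simp: lookup_single when_def in_keys_iff)
qed

lemma mon_deg_le1:
  assumes "mon_deg m \<le> 1"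
  shows "m = 0 \<or> (\<exists>v. m = Poly_Mapping.single v 1)"
proof -
  have "\<exists>w. Poly_Mapping.keys m \<subseteq> {w}"
  proof (rule ccontr)
    assume "\<not> ?thesis"
    then obtain u v where uv: "u \<in> Poly_Mapping.keys m" "v \<in> Poly_Mapping.keys m" "u \<noteq> v"
      by blast
    have "(\<Sum>i\<in>{u,v}. Poly_Mapping.lookup m i) \<le> mon_deg m"
      unfolding mon_deg_def by (rule sum_mono2) (use uv in auto)
    moreover have "Poly_Mapping.lookup m u \<ge> 1" "Poly_Mapping.lookup m v \<ge> 1"
      using uv by (auto simp: in_keys_iff)
    ultimately show False using uv assms by simp
  qed
  then obtain w where "Poly_Mapping.keys m \<subseteq> {w}" by blast
  from keys_sub_single[OF this] assms show ?thesis
    by (cases "mon_deg m") auto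
qed

lemma ordge_mono: "ordge e q \<Longrightarrow> e' \<le> e \<Longrightarrow> ordge e' q"
  by (auto simp: ordge_def)

lemma ordge_0 [simp]: "ordge 0 q"
  by (simp add: ordge_def)

lemma ordge_zero_poly [simp]: "ordge e 0"
  by (simp add: ordge_def)

lemma ordge_add: "ordge e p \<Longrightarrow> ordge e q \<Longrightarrow> ordge e (p + q)"
  using keys_add[of p q] by (auto simp: ordge_def)

lemma ordge_mult: "ordge a p \<Longrightarrow> ordge b q \<Longrightarrow> ordge (a + b) (p * q)"
  using keys_mult[of p q] by (fastforce simp: ordge_def mon_deg_add intro: add_mono)

lemma ordge_sum: "(\<And>x. x \<in> A \<Longrightarrow> ordge e (g x)) \<Longrightarrow> ordge e (\<Sum>x\<in>A. g x)"
  by (induction A rule: infinite_finite_induct) (auto intro: ordge_add)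

lemma ordge_one: "ordge 0 1"
  by simp

lemma ordge_pow: "ordge e p \<Longrightarrow> ordge (e * n) (p ^ n)"
  by (induction n) (auto dest: ordge_mult)

lemma ordge_prod: "(\<And>x. x \<in> A \<Longrightarrow> ordge (g x) (P x)) \<Longrightarrow> ordge (\<Sum>x\<in>A. g x) (\<Prod>x\<in>A. P x)"
  by (induction A rule: infinite_finite_induct) (auto intro: ordge_mult)

lemma ordge_mvar: "ordge 1 (mvar i)"
  by (simp add: ordge_def mvar_def)

lemma ordge_pderiv:
  assumes "homogeneous d p"
  shows "ordge (d - 1) (mpderiv i p)"
  unfolding mpderiv_def
proof (rule ordge_sum)
  fix m assume m: "m \<in> Poly_Mapping.keys p"
  show "ordge (d - 1) (Poly_Mapping.single (m - Poly_Mapping.single i 1)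
          (of_nat (Poly_Mapping.lookup m i) * Poly_Mapping.lookup p m))"
  proof (cases "Poly_Mapping.lookup m i = 0")
    case True then show ?thesis by simp
  next
    case False
    have "m = (m - Poly_Mapping.single i 1) + Poly_Mapping.single i 1"
      using False by (intro poly_mapping_eqI) (auto simp: lookup_add lookup_minus lookup_single when_def)
    then have "mon_deg m = mon_deg (m - Poly_Mapping.single i 1) + 1"
      by (metis mon_deg_add mon_deg_single)
    moreover have "mon_deg m = d" using assms m by (auto simp: homogeneous_def)
    ultimately show ?thesis by (auto simp: ordge_def)
  qed
qed

lemma vanish_coeff:
  fixes p :: "'v mpoly"
  assumes "\<And>t. meval (\<lambda>v. t * (if v = w then 1 else 0)) p = 0"
  shows "Poly_Mapping.lookup p (Poly_Mapping.single w e) = 0"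
proof -
  define P where "P = (\<Sum>m\<in>Poly_Mapping.keys p.
     monom (if Poly_Mapping.keys m \<subseteq> {w} then Poly_Mapping.lookup p m else 0) (mon_deg m))"
  have prodeq: "(\<Prod>i\<in>Poly_Mapping.keys m. (t * (if i = w then 1 else 0)) ^ Poly_Mapping.lookup m i)
      = (if Poly_Mapping.keys m \<subseteq> {w} then t ^ mon_deg m else 0)" for t :: complex and m :: "'v \<Rightarrow>\<^sub>0 nat"
  proof (cases "Poly_Mapping.keys m \<subseteq> {w}")
    case True
    then have "(\<Prod>i\<in>Poly_Mapping.keys m. (t * (if i = w then 1 else 0)) ^ Poly_Mapping.lookup m i)
       = (\<Prod>i\<in>Poly_Mapping.keys m. t ^ Poly_Mapping.lookup m i)"
      by (intro prod.cong) auto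
    also have "\<dots> = t ^ mon_deg m" by (simp add: mon_deg_def power_sum)
    finally show ?thesis using True by simp
  next
    case False
    then obtain i where "i \<in> Poly_Mapping.keys m" "i \<noteq> w" by blast
    then show ?thesis using False
      by (subst prod_zero) (auto simp: in_keys_iff intro!: bexI[of _ i])
  qed
  have "poly P t = 0" for t
  proof -
    have "poly P t = meval (\<lambda>v. t * (if v = w then 1 else 0)) p"
      unfolding P_def meval_def poly_sum poly_monom prodeq
      by (intro sum.cong) auto
    then show ?thesis using assms by simp
  qed
  then have "P = 0" using poly_all_0_iff_0 by blast
  then have "0 = coeff P e" by simp
  also have "\<dots> = (\<Sum>m\<in>Poly_Mapping.keys p.
      (if m = Poly_Mapping.single w e then Poly_Mapping.lookup p m else 0))"
    unfolding P_def coeff_sum coeff_monom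
  proof (intro sum.cong refl)
    fix m
    have "(Poly_Mapping.keys m \<subseteq> {w} \<and> mon_deg m = e) = (m = Poly_Mapping.single w e)"
      using keys_sub_single[of m w] by (auto split: if_splits)
    then show "(if mon_deg m = e then if Poly_Mapping.keys m \<subseteq> {w} then Poly_Mapping.lookup p m else 0 else 0) =
         (if m = Poly_Mapping.single w e then Poly_Mapping.lookup p m else 0)"
      by auto
  qed
  also have "\<dots> = Poly_Mapping.lookup p (Poly_Mapping.single w e)"
    by (simp add: sum.delta in_keys_iff)
  finally show ?thesis by simp
qed

lemma inW_Inr:
  assumes "1 \<le> k"
  shows "in_W k n (\<lambda>v. t * (if v = Inr i then 1 else 0))"
  unfolding in_W_def
  using assms by (auto intro!: exI[of _ "\<lambda>_. 1"] exI[of _ 0])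

lemma inW_Inl:
  assumes "2 \<le> k" "j0 < k"
  shows "in_W k n (\<lambda>v. t * (if v = Inl (i0, j0) then 1 else 0))"
  unfolding in_W_def
proof (intro conjI allI impI)
  define j1 where "j1 = (if j0 = 0 then 1 else (0::nat))"
  have j1: "j1 < k" "j1 \<noteq> j0" using assms by (auto simp: j1_def)
  show "\<exists>c::nat\<Rightarrow>complex. (\<exists>j<k. c j \<noteq> 0) \<and>
     (\<forall>i\<le>n. (\<Sum>j<k. t * (if Inl (i, j) = Inl (i0, j0) then 1 else 0) * c j) = 0)"
    using j1 by (intro exI[of _ "\<lambda>j. if j = j1 then 1 else 0"]) (auto intro!: sum.neutral)
qed simp

lemma lookup_ordge2: "ordge 2 q \<Longrightarrow> mon_deg m < 2 \<Longrightarrow> Poly_Mapping.lookup q m = 0"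
  by (meson in_keys_iff leD ordge_def)

lemma ordge_Jgen:
  assumes "1 \<le> k" "\<forall>j<k. 2 \<le> d j" "in_Pi k d n f" "\<not> (k = 1 \<and> d 0 = 2)"
    and p: "p \<in> I_W k n"
  shows "ordge 2 (msubst (F_map f) p)"
proof -
  have pW: "\<And>a. in_W k n a \<Longrightarrow> meval a p = 0" and mv: "mvars p \<subseteq> W_vars k n"
    using p by (auto simp: I_W_def polyring_def)
  have Inr0: "Poly_Mapping.lookup p (Poly_Mapping.single (Inr i) e) = 0" for i e
    by (rule vanish_coeff) (use pW inW_Inr[OF assms(1)] in blast)
  have Inl0: "Poly_Mapping.lookup p (Poly_Mapping.single (Inl (i, j)) e) = 0" if "2 \<le> k" "j < k" for i j e
    by (rule vanish_coeff) (use pW inW_Inl[OF that] in blast)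
  have keysW: "Poly_Mapping.keys m \<subseteq> W_vars k n" if "m \<in> Poly_Mapping.keys p" for m
    using mv that by (auto simp: mvars_def)
  have F1: "ordge 1 (F_map f v)" if vin: "v \<in> W_vars k n" for v
  proof (cases v)
    case (Inl a)
    then obtain i j where ij: "v = Inl (i, j)" "j < k" using vin Inl by (cases a) (auto simp: W_vars_def)
    have "homogeneous (d j) (f j)" using assms(3) ij by (auto simp: in_Pi_def)
    from ordge_pderiv[OF this, of i] have "ordge (d j - 1) (mpderiv i (f j))" .
    moreover have "1 \<le> d j - 1" using ij assms(2) by force
    ultimately show ?thesis using ij by (auto simp: F_map_def intro: ordge_mono)
  next
    case (Inr i) then show ?thesis using ordge_mvar[of i] by (simp add: F_map_def)
  qed
  have F2: "ordge 2 (F_map f (Inl (i, j)))" if "k = 1" "j < k" for i j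
  proof -
    have j: "j = 0" using that by simp
    have "homogeneous (d j) (f j)" using assms(3) that by (auto simp: in_Pi_def)
    from ordge_pderiv[OF this, of i] have "ordge (d j - 1) (mpderiv i (f j))" .
    moreover have "d j \<ge> 3" using assms(2,4) that j by force
    ultimately show ?thesis by (auto simp: F_map_def intro: ordge_mono)
  qed
  show ?thesis
    unfolding msubst_def
  proof (rule ordge_sum)
    fix m assume m: "m \<in> Poly_Mapping.keys p"
    have "ordge 2 (\<Prod>i\<in>Poly_Mapping.keys m. F_map f i ^ Poly_Mapping.lookup m i)"
    proof (cases "mon_deg m \<le> 1")
      case False
      have "ordge (\<Sum>i\<in>Poly_Mapping.keys m. 1 * Poly_Mapping.lookup m i)
               (\<Prod>i\<in>Poly_Mapping.keys m. F_map f i ^ Poly_Mapping.lookup m i)"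
        by (rule ordge_prod, rule ordge_pow, rule F1) (use keysW[OF m] in auto)
      then show ?thesis using False by (auto simp: mon_deg_def intro: ordge_mono)
    next
      case True
      from mon_deg_le1[OF this] show ?thesis
      proof
        assume "m = 0"
        then show ?thesis using m Inr0[of 0 0] by (simp add: in_keys_iff)
      next
        assume "\<exists>v. m = Poly_Mapping.single v 1"
        then obtain v where v: "m = Poly_Mapping.single v 1" by blast
        then have vW: "v \<in> W_vars k n" using keysW[OF m] by auto
        show ?thesis
        proof (cases v)
          case (Inr i) then show ?thesis using m v Inr0[of i 1] by (simp add: in_keys_iff)
        next
          case (Inl a)
          then obtain i j where ij: "v = Inl (i, j)" "j < k" using vW Inl by (cases a) (auto simp: W_vars_def)
          show ?thesis
          proof (cases "k = 1")
            case True then show ?thesis using v ij F2[OF True ij(2), of i] by simp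
          next
            case False
            then show ?thesis using m v ij Inl0[of j i 1] assms(1) by (simp add: in_keys_iff)
          qed
        qed
      qed
    qed
    then show "ordge 2 (mconst (Poly_Mapping.lookup p m) *
          (\<Prod>i\<in>Poly_Mapping.keys m. F_map f i ^ Poly_Mapping.lookup m i))"
      using ordge_mult[OF ordge_0] by fastforce
  qed
qed

lemma ordge_J:
  assumes "1 \<le> k" "\<forall>j<k. 2 \<le> d j" "in_Pi k d n f" "\<not> (k = 1 \<and> d 0 = 2)"
    and q: "q \<in> gen_ideal {..n} (msubst (F_map f) ` I_W k n)"
  shows "ordge 2 q"
proof -
  obtain S c where S: "S \<subseteq> msubst (F_map f) ` I_W k n" "q = (\<Sum>g\<in>S. c g * g)"
    using q by (auto simp: gen_ideal_def)
  show ?thesis unfolding S(2)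
    by (rule ordge_sum) (use S(1) ordge_Jgen[OF assms(1-4)] ordge_mult[OF ordge_0] in fastforce)
qed

lemma span_card:
  fixes n :: nat and J :: "nat mpoly set"
  assumes J: "\<And>q. q \<in> J \<Longrightarrow> ordge 2 q"
    and B: "finite B" "spans_mod {..n} J B"
  shows "2 \<le> card B"
proof (rule ccontr)
  assume "\<not> 2 \<le> card B"
  then have "card B = 0 \<or> card B = 1" by linarith
  then have "B = {} \<or> (\<exists>b. B = {b})" using B(1) card_1_singleton_iff[of B] by auto
  have one: "(mconst 1 :: nat mpoly) \<in> polyring {..n}"
    by (simp add: polyring_def mconst_def mvars_def)
  have x0: "(mvar 0 :: nat mpoly) \<in> polyring {..n}"
    by (simp add: polyring_def mvar_def mvars_def)
  obtain c1 where c1: "mconst 1 - (\<Sum>b\<in>B. mconst (c1 b) * b) \<in> J"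
    using B(2) one unfolding spans_mod_def by blast
  obtain c2 where c2: "mvar 0 - (\<Sum>b\<in>B. mconst (c2 b) * b) \<in> J"
    using B(2) x0 unfolding spans_mod_def by blast
  have s1: "mon_deg (Poly_Mapping.single (0::nat) (1::nat)) < 2" by simp
  have s0: "mon_deg (0 :: nat \<Rightarrow>\<^sub>0 nat) < 2" by simp
  from \<open>B = {} \<or> _\<close> show False
  proof
    assume "B = {}"
    with c1 have "ordge 2 (mconst 1 :: nat mpoly)" using J by simp
    from lookup_ordge2[OF this s0] show False by (simp add: mconst_def)
  next
    assume "\<exists>b. B = {b}"
    then obtain b where b: "B = {b}" by blast
    from c1 b J have o1: "ordge 2 (mconst 1 - mconst (c1 b) * b)" by simp
    from c2 b J have o2: "ordge 2 (mvar 0 - mconst (c2 b) * b)" by simp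
    from lookup_ordge2[OF o1 s0] have "1 - c1 b * Poly_Mapping.lookup b 0 = 0"
      by (simp add: lookup_minus lookup_mconst_mult lookup_mconst)
    then have "c1 b \<noteq> 0" by auto
    from lookup_ordge2[OF o1 s1] have "0 - c1 b * Poly_Mapping.lookup b (Poly_Mapping.single 0 1) = 0"
      by (simp add: lookup_minus lookup_mconst_mult lookup_mconst)
    with \<open>c1 b \<noteq> 0\<close> have b1: "Poly_Mapping.lookup b (Poly_Mapping.single 0 1) = 0" by simp
    from lookup_ordge2[OF o2 s1] have "1 - c2 b * Poly_Mapping.lookup b (Poly_Mapping.single 0 1) = 0"
      by (simp add: lookup_minus lookup_mconst_mult mvar_def)
    with b1 show False by simp
  qed
qed

theorem proposition9:
  fixes k n :: nat and d :: "nat \<Rightarrow> nat" and f :: "nat \<Rightarrow> nat mpoly"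
  assumes "1 \<le> k" and "k \<le> n + 1"
    and "\<forall>j<k. 2 \<le> d j"
    and "\<forall>i j. i \<le> j \<longrightarrow> j < k \<longrightarrow> d i \<le> d j"
    and "in_Pi k d n f" and "\<not> in_Sigma k n f"
    and "\<not> (k = 1 \<and> d 0 = 2)"
  shows "mult_N k n f > 1"
proof -
  let ?J = "gen_ideal {..n} (msubst (F_map f) ` I_W k n)"
  have J: "\<And>q. q \<in> ?J \<Longrightarrow> ordge 2 q"
    using ordge_J[OF assms(1,3,5,7)] by blast
  let ?P = "\<lambda>N. \<exists>B. finite B \<and> B \<subseteq> polyring {..n} \<and> spans_mod {..n} ?J B \<and> card B = N"
  show ?thesis
  proof (cases "\<exists>B. finite B \<and> B \<subseteq> polyring {..n} \<and> spans_mod {..n} ?J B")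
    case True
    then have ex: "\<exists>N. ?P N" by blast
    have "?P (LEAST N. ?P N)" by (rule LeastI_ex[OF ex])
    then obtain B where B: "finite B" "spans_mod {..n} ?J B" "card B = (LEAST N. ?P N)"
      by blast
    have "2 \<le> (LEAST N. ?P N)" using span_card[OF J B(1,2)] B(3) by simp
    moreover have "mult_N k n f = enat (LEAST N. ?P N)"
      unfolding mult_N_def quot_dim_def using True by (simp only: if_True)
    ultimately show ?thesis by (simp add: one_enat_def)
  next
    case False
    have "mult_N k n f = \<infinity>"
      unfolding mult_N_def quot_dim_def using False by (simp only: if_False)
    then show ?thesis by simp
  qed
qed

end
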